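(* Let $1<a_1<a_2$ be coprime integers, $S=\langle a_1,a_2\rangle$, and $t\in(1,\infty)$. If $r_0(t)$ is rational and $|a_1a_2P(t)|>a_1$, then $t$ is perspicacious, i.e. $[0,a_2]$ is not contained in the closure of $\Delta_t(S)$.
   Context: $S=\{\lambda_1a_1+\lambda_2a_2:\lambda_1,\lambda_2\in\mathbb{N}_0\}$. For $t\in[1,\infty)$ and $(u,v)\in\mathbb{R}^2$, $\|(u,v)\|_t=(|u|^t+|v|^t)^{1/t}$. For $x\in S$, $Z(x)=\{(m,n)\in\mathbb{N}_0^2: ma_1+na_2=x\}$, $\mathscr{L}_t(x)=\{\|f\|_t: f\in Z(x)\}$, $\Delta_t(x)$ is the set of differences between consecutive elements of $\mathscr{L}_t(x)$ (in increasing order), and $\Delta_t(S)=\bigcup_{x\in S}\Delta_t(x)$. A parameter $t\in(1,\infty)$ is dull if $[0,a_2]$ is contained in the closure of $\Delta_t(S)$, and perspicacious otherwise. Define $\mu_t(r)=\left\|\left(\frac{1-r}{a_1},\frac{r}{a_2}\right)\right\|_t$ for $r\in[0,1]$, $r_0(t)=\min\{r\in[0,1]:\mu_t(r)=\frac{1}{a_2}\}$, and $P(t)=\mu_t'(r_0(t))$ (derivative in $r$). *)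

theory Defs
  imports "HOL-Analysis.Analysis"
begin

definition numsg :: "nat \<Rightarrow> nat \<Rightarrow> nat set" where
  "numsg a1 a2 = {l1 * a1 + l2 * a2 | l1 l2. True}"

definition tnorm :: "real \<Rightarrow> real \<times> real \<Rightarrow> real" where
  "tnorm t uv = (\<bar>fst uv\<bar> powr t + \<bar>snd uv\<bar> powr t) powr (1 / t)"

definition factorizations :: "nat \<Rightarrow> nat \<Rightarrow> nat \<Rightarrow> (nat \<times> nat) set" where
  "factorizations a1 a2 x = {(m, n). m * a1 + n * a2 = x}"

definition tlengths :: "real \<Rightarrow> nat \<Rightarrow> nat \<Rightarrow> nat \<Rightarrow> real set" where
  "tlengths t a1 a2 x = (\<lambda>(m, n). tnorm t (real m, real n)) ` factorizations a1 a2 x"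

definition tdelta :: "real \<Rightarrow> nat \<Rightarrow> nat \<Rightarrow> nat \<Rightarrow> real set" where
  "tdelta t a1 a2 x = {z - y | y z. y \<in> tlengths t a1 a2 x \<and> z \<in> tlengths t a1 a2 x \<and> y < z
      \<and> (\<forall>w \<in> tlengths t a1 a2 x. \<not> (y < w \<and> w < z))}"

definition tdelta_S :: "real \<Rightarrow> nat \<Rightarrow> nat \<Rightarrow> real set" where
  "tdelta_S t a1 a2 = (\<Union>x \<in> numsg a1 a2. tdelta t a1 a2 x)"

definition dull :: "real \<Rightarrow> nat \<Rightarrow> nat \<Rightarrow> bool" where
  "dull t a1 a2 \<longleftrightarrow> {0 .. real a2} \<subseteq> closure (tdelta_S t a1 a2)"

definition perspicacious :: "real \<Rightarrow> nat \<Rightarrow> nat \<Rightarrow> bool" where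
  "perspicacious t a1 a2 \<longleftrightarrow> \<not> dull t a1 a2"

definition mu :: "real \<Rightarrow> nat \<Rightarrow> nat \<Rightarrow> real \<Rightarrow> real" where
  "mu t a1 a2 r = tnorm t ((1 - r) / real a1, r / real a2)"

definition r0 :: "real \<Rightarrow> nat \<Rightarrow> nat \<Rightarrow> real" where
  "r0 t a1 a2 = (LEAST r. r \<in> {0..1} \<and> mu t a1 a2 r = 1 / real a2)"

definition Pder :: "real \<Rightarrow> nat \<Rightarrow> nat \<Rightarrow> real" where
  "Pder t a1 a2 = deriv (mu t a1 a2) (r0 t a1 a2)"

end

theory Submission
  imports Defs
begin


lemma tnorm_nonneg: "tnorm t uv \<ge> 0"
  unfolding tnorm_def by simp

lemma tnorm_homog:
  fixes t c u v :: real
  assumes "t > 0"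
  shows "tnorm t (c * u, c * v) = \<bar>c\<bar> * tnorm t (u,v)"
proof -
  have "\<bar>c * u\<bar> powr t + \<bar>c * v\<bar> powr t = \<bar>c\<bar> powr t * (\<bar>u\<bar> powr t + \<bar>v\<bar> powr t)"
    by (simp add: abs_mult powr_mult distrib_left)
  hence "tnorm t (c * u, c * v) = (\<bar>c\<bar> powr t) powr (1/t) * (\<bar>u\<bar> powr t + \<bar>v\<bar> powr t) powr (1/t)"
    unfolding tnorm_def by (simp add: powr_mult)
  also have "(\<bar>c\<bar> powr t) powr (1/t) = \<bar>c\<bar>"
    using assms by (simp add: powr_powr)
  finally show ?thesis unfolding tnorm_def by simp
qed

lemma tnorm_le1_iff:
  fixes t u v :: real
  assumes "t > 0"
  shows "tnorm t (u,v) \<le> 1 \<longleftrightarrow> \<bar>u\<bar> powr t + \<bar>v\<bar> powr t \<le> 1"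
proof -
  define S where "S = \<bar>u\<bar> powr t + \<bar>v\<bar> powr t"
  have S0: "S \<ge> 0" unfolding S_def by simp
  have "tnorm t (u,v) = S powr (1/t)" unfolding tnorm_def S_def by simp
  moreover have "S powr (1/t) \<le> 1 \<longleftrightarrow> S \<le> 1"
  proof
    assume "S powr (1/t) \<le> 1"
    hence "(S powr (1/t)) powr t \<le> 1 powr t" using assms by (intro powr_mono2) auto
    thus "S \<le> 1" using assms S0 by (simp add: powr_powr)
  next
    assume "S \<le> 1"
    thus "S powr (1/t) \<le> 1" using assms S0 powr_mono2[of "1/t" S 1] by simp
  qed
  ultimately show ?thesis unfolding S_def by simp
qed

lemma tnorm_eq0:
  fixes t u v :: real
  assumes "t > 0" "tnorm t (u,v) = 0"
  shows "u = 0 \<and> v = 0"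
proof -
  have "\<bar>u\<bar> powr t + \<bar>v\<bar> powr t = 0" using assms unfolding tnorm_def by simp
  hence "\<bar>u\<bar> powr t = 0" "\<bar>v\<bar> powr t = 0" by (smt (verit) powr_ge_zero)+
  thus ?thesis by simp
qed

lemma powr_convex0:
  fixes t a b \<theta> :: real
  assumes "t \<ge> 1" "a \<ge> 0" "b \<ge> 0" "\<theta> \<ge> 0" "\<theta> \<le> 1"
  shows "(\<theta>*a + (1-\<theta>)*b) powr t \<le> \<theta> * a powr t + (1-\<theta>) * b powr t"
proof (cases "a = 0 \<or> b = 0 \<or> \<theta> = 0 \<or> \<theta> = 1")
  case True
  have k: "c powr t \<le> c" if "0 \<le> c" "c \<le> 1" for c :: real
    using that assms(1) powr_mono'[of 1 t c] by (cases "c = 0") auto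
  show ?thesis
  proof -
    consider "a = 0" | "b = 0" | "\<theta> = 0" | "\<theta> = 1" using True by blast
    then show ?thesis
    proof cases
      case 1
      have "((1-\<theta>)*b) powr t = (1-\<theta>) powr t * b powr t" using assms by (simp add: powr_mult)
      also have "\<dots> \<le> (1-\<theta>) * b powr t" using k[of "1-\<theta>"] assms by (intro mult_right_mono) auto
      finally show ?thesis using 1 assms by simp
    next
      case 2
      have "(\<theta>*a) powr t = \<theta> powr t * a powr t" using assms by (simp add: powr_mult)
      also have "\<dots> \<le> \<theta> * a powr t" using k[of "\<theta>"] assms by (intro mult_right_mono) auto
      finally show ?thesis using 2 assms by simp
    qed (use assms in auto)
  qed
next
  case False
  hence "a > 0" "b > 0" "\<theta> > 0" "\<theta> < 1" using assms by auto
  from convex_onD[OF powr_convex[OF assms(1)], of "1-\<theta>" a b] this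
  show ?thesis by (simp add: algebra_simps)
qed

lemma unit_ball_convex:
  fixes t u1 v1 u2 v2 \<theta> :: real
  assumes "t \<ge> 1" "\<bar>u1\<bar> powr t + \<bar>v1\<bar> powr t \<le> 1" "\<bar>u2\<bar> powr t + \<bar>v2\<bar> powr t \<le> 1"
    "0 \<le> \<theta>" "\<theta> \<le> 1"
  shows "\<bar>\<theta>*u1 + (1-\<theta>)*u2\<bar> powr t + \<bar>\<theta>* v1 + (1-\<theta>)* v2\<bar> powr t \<le> 1"
proof -
  have h: "\<bar>\<theta>*a + (1-\<theta>)*b\<bar> powr t \<le> \<theta> * \<bar>a\<bar> powr t + (1-\<theta>) * \<bar>b\<bar> powr t" for a b :: real
  proof -
    have "\<bar>\<theta>*a + (1-\<theta>)*b\<bar> \<le> \<theta>*\<bar>a\<bar> + (1-\<theta>)*\<bar>b\<bar>"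
      using assms(4,5) abs_triangle_ineq[of "\<theta>*a" "(1-\<theta>)*b"] by (simp add: abs_mult)
    hence "\<bar>\<theta>*a + (1-\<theta>)*b\<bar> powr t \<le> (\<theta>*\<bar>a\<bar> + (1-\<theta>)*\<bar>b\<bar>) powr t"
      using assms(1) by (intro powr_mono2) auto
    also have "\<dots> \<le> \<theta> * \<bar>a\<bar> powr t + (1-\<theta>) * \<bar>b\<bar> powr t"
      using assms by (intro powr_convex0) auto
    finally show ?thesis .
  qed
  have "\<bar>\<theta>*u1 + (1-\<theta>)*u2\<bar> powr t + \<bar>\<theta>* v1 + (1-\<theta>)* v2\<bar> powr t
      \<le> \<theta> * (\<bar>u1\<bar> powr t + \<bar>v1\<bar> powr t) + (1-\<theta>) * (\<bar>u2\<bar> powr t + \<bar>v2\<bar> powr t)"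
    using h[of u1 u2] h[of v1 v2] by (simp add: algebra_simps)
  also have "\<dots> \<le> \<theta> * 1 + (1-\<theta>) * 1"
    using assms by (intro add_mono mult_left_mono) auto
  finally show ?thesis by simp
qed

lemma tnorm_triangle:
  fixes t u1 v1 u2 v2 :: real
  assumes "t \<ge> 1"
  shows "tnorm t (u1+u2, v1+v2) \<le> tnorm t (u1,v1) + tnorm t (u2,v2)"
proof -
  define \<alpha> where "\<alpha> = tnorm t (u1,v1)"
  define \<beta> where "\<beta> = tnorm t (u2,v2)"
  have t0: "t > 0" using assms by simp
  show ?thesis
  proof (cases "\<alpha> = 0 \<or> \<beta> = 0")
    case True
    then show ?thesis using tnorm_eq0[OF t0, of u1 v1] tnorm_eq0[OF t0, of u2 v2]
      unfolding \<alpha>_def \<beta>_def by auto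
  next
    case False
    hence ap: "\<alpha> > 0" and bp: "\<beta> > 0" using tnorm_nonneg unfolding \<alpha>_def \<beta>_def
      by (metis less_eq_real_def)+
    define \<theta> where "\<theta> = \<alpha> / (\<alpha> + \<beta>)"
    have a1: "tnorm t (u1/\<alpha>, v1/\<alpha>) = 1"
      using tnorm_homog[OF t0, of "1/\<alpha>" u1 v1] ap unfolding \<alpha>_def by simp
    have b1: "tnorm t (u2/\<beta>, v2/\<beta>) = 1"
      using tnorm_homog[OF t0, of "1/\<beta>" u2 v2] bp unfolding \<beta>_def by simp
    have a2: "\<bar>u1/\<alpha>\<bar> powr t + \<bar>v1/\<alpha>\<bar> powr t \<le> 1" using a1 tnorm_le1_iff[OF t0, of "u1/\<alpha>" "v1/\<alpha>"] by simp
    have b2: "\<bar>u2/\<beta>\<bar> powr t + \<bar>v2/\<beta>\<bar> powr t \<le> 1" using b1 tnorm_le1_iff[OF t0, of "u2/\<beta>" "v2/\<beta>"] by simp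
    have "\<bar>\<theta>*(u1/\<alpha>) + (1-\<theta>)*(u2/\<beta>)\<bar> powr t
        + \<bar>\<theta>*(v1/\<alpha>) + (1-\<theta>)*(v2/\<beta>)\<bar> powr t \<le> 1"
      apply (rule unit_ball_convex[OF assms a2 b2])
      using ap bp unfolding \<theta>_def by auto
    moreover have "\<theta>*(u1/\<alpha>) + (1-\<theta>)*(u2/\<beta>) = (1/(\<alpha>+\<beta>)) * (u1+u2)"
      "\<theta>*(v1/\<alpha>) + (1-\<theta>)*(v2/\<beta>) = (1/(\<alpha>+\<beta>)) * (v1+v2)"
      using ap bp unfolding \<theta>_def by (simp_all add: divide_simps; simp add: algebra_simps)+
    ultimately have "tnorm t ((1/(\<alpha>+\<beta>)) * (u1+u2), (1/(\<alpha>+\<beta>)) * (v1+v2)) \<le> 1"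
      using tnorm_le1_iff[OF t0] by simp
    hence "tnorm t (u1+u2, v1+v2) / (\<alpha>+\<beta>) \<le> 1"
      using tnorm_homog[OF t0, of "1/(\<alpha>+\<beta>)" "u1+u2" "v1+v2"] ap bp by simp
    thus ?thesis using ap bp unfolding \<alpha>_def \<beta>_def by (simp add: field_simps)
  qed
qed

lemma tnorm_mono:
  fixes t u v u' v' :: real
  assumes "t > 0" "\<bar>u\<bar> \<le> \<bar>u'\<bar>" "\<bar>v\<bar> \<le> \<bar>v'\<bar>"
  shows "tnorm t (u,v) \<le> tnorm t (u',v')"
  unfolding tnorm_def using assms
  by (auto intro!: powr_mono2 add_mono)

lemma tnorm_ge_snd:
  fixes t u v :: real
  assumes "t > 0"
  shows "\<bar>v\<bar> \<le> tnorm t (u,v)"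
proof -
  have "tnorm t (0,v) = \<bar>v\<bar>" unfolding tnorm_def using assms by (simp add: powr_powr)
  thus ?thesis using tnorm_mono[OF assms, of 0 u v v] by simp
qed

lemma mu_convex:
  fixes t :: real
  assumes "t \<ge> 1"
  shows "convex_on UNIV (mu t a1 a2)"
proof (rule convex_onI)
  fix l x y :: real
  assume "l > 0" "l < 1"
  have t0: "t > 0" using assms by simp
  have e1: "(1 - ((1-l)*x + l*y))/a1 = (1-l)*((1-x)/a1) + l*((1-y)/a1)"
    by (simp add: divide_simps) (simp add: algebra_simps)
  have e2: "((1-l)*x + l*y)/a2 = (1-l)*(x/a2) + l*(y/a2)"
    by (simp add: divide_simps)
  have "mu t a1 a2 ((1 - l) *\<^sub>R x + l *\<^sub>R y)
     = tnorm t ((1-l)*((1-x)/a1) + l*((1-y)/a1), (1-l)*(x/a2) + l*(y/a2))"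
    unfolding mu_def using e1 e2 by simp
  also have "\<dots> \<le> tnorm t ((1-l)*((1-x)/a1), (1-l)*(x/a2)) + tnorm t (l*((1-y)/a1), l*(y/a2))"
    by (rule tnorm_triangle[OF assms])
  also have "\<dots> = \<bar>1-l\<bar> * mu t a1 a2 x + \<bar>l\<bar> * mu t a1 a2 y"
    unfolding mu_def by (simp only: tnorm_homog[OF t0])
  also have "\<dots> = (1-l) * mu t a1 a2 x + l * mu t a1 a2 y"
    using \<open>l > 0\<close> \<open>l < 1\<close> by simp
  finally show "mu t a1 a2 ((1 - l) *\<^sub>R x + l *\<^sub>R y) \<le> (1 - l) * mu t a1 a2 x + l * mu t a1 a2 y" .
qed simp



context
  fixes a1 a2 :: nat and t :: real
  assumes a1: "1 < a1" and a12: "a1 < a2" and t1: "1 < t"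
begin

lemma mu_at0: "mu t a1 a2 0 = 1/a1"
  unfolding mu_def tnorm_def using t1 by (simp add: powr_powr)

lemma mu_at1: "mu t a1 a2 1 = 1/a2"
  unfolding mu_def tnorm_def using t1 by (simp add: powr_powr)

lemma mu_cvx: "convex_on UNIV (mu t a1 a2)"
  using mu_convex t1 by simp

lemma mu_cont: "continuous_on UNIV (mu t a1 a2)"
  by (rule convex_on_continuous[OF open_UNIV mu_cvx])

lemma r0_char:
  defines "R \<equiv> {0..1} \<inter> {r. mu t a1 a2 r = 1/a2}"
  shows "r0 t a1 a2 = Inf R" "r0 t a1 a2 \<in> R"
proof -
  have cl: "closed R" unfolding R_def
    by (intro closed_Int closed_atLeastAtMost closed_Collect_eq mu_cont continuous_on_const)
  have "1 \<in> R" unfolding R_def using mu_at1 by auto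
  hence ne: "R \<noteq> {}" by blast
  have bb: "bdd_below R" unfolding R_def by (auto intro: bdd_belowI[of _ 0])
  have inR: "Inf R \<in> R" by (rule closed_contains_Inf[OF ne bb cl])
  show "r0 t a1 a2 = Inf R"
    unfolding r0_def
  proof (rule Least_equality)
    show "Inf R \<in> {0..1} \<and> mu t a1 a2 (Inf R) = 1 / real a2" using inR unfolding R_def by auto
    fix y assume "y \<in> {0..1} \<and> mu t a1 a2 y = 1 / real a2"
    hence "y \<in> R" unfolding R_def by auto
    thus "Inf R \<le> y" by (rule cInf_lower[OF _ bb])
  qed
  thus "r0 t a1 a2 \<in> R" using inR by simp
qed

lemma r0_le: "r \<in> {0..1} \<Longrightarrow> mu t a1 a2 r = 1/a2 \<Longrightarrow> r0 t a1 a2 \<le> r"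
proof -
  assume "r \<in> {0..1}" "mu t a1 a2 r = 1/a2"
  hence "r \<in> {0..1} \<inter> {r. mu t a1 a2 r = 1/a2}" by auto
  thus ?thesis using r0_char(1) by (auto intro!: cInf_lower bdd_belowI[of _ 0])
qed

lemma r0_val: "mu t a1 a2 (r0 t a1 a2) = 1/a2" and r0_01: "r0 t a1 a2 \<in> {0..1}"
  using r0_char(2) by auto

lemma below_r0: 
  assumes "0 \<le> r" "r < r0 t a1 a2"
  shows "mu t a1 a2 r > 1/a2"
proof (rule ccontr)
  assume "\<not> ?thesis"
  hence "mu t a1 a2 r \<le> 1/a2" by simp
  moreover have "1/a2 \<le> mu t a1 a2 0" using mu_at0 a12 a1 by (simp add: frac_le)
  ultimately obtain s where s: "0 \<le> s" "s \<le> r" "mu t a1 a2 s = 1/a2"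
    using IVT2'[of "mu t a1 a2" r "1/a2" 0] assms continuous_on_subset[OF mu_cont] by auto
  have "s \<le> 1" using s assms r0_01 by auto
  hence "r0 t a1 a2 \<le> s" using s r0_le by auto
  thus False using s assms by simp
qed

lemma r0_pos: "r0 t a1 a2 > 0"
proof -
  have "1/real a1 \<noteq> 1/a2" using a12 a1 by (simp add: divide_simps)
  hence "mu t a1 a2 0 \<noteq> 1/a2" using mu_at0 by simp
  thus ?thesis using r0_val r0_01 by (metis atLeastAtMost_iff less_eq_real_def)
qed

lemma r0_lt1: "r0 t a1 a2 < 1"
proof -
  define c where "c = (real a1 / a2) powr t"
  have c0: "c > 0" unfolding c_def using a1 a12 by simp
  define s where "s = min (1/2) ((c/2) powr (1/(t-1)))"
  have s0: "s > 0" "s < 1" unfolding s_def using c0 by auto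
  have "s powr (t-1) \<le> ((c/2) powr (1/(t-1))) powr (t-1)"
    unfolding s_def using t1 s0 by (intro powr_mono2) (auto simp: s_def)
  also have "\<dots> = c/2" using t1 c0 by (simp add: powr_powr)
  finally have sc: "s powr (t-1) < c" using c0 by simp
  have "(s/a1) powr t = s * s powr (t-1) / a1 powr t"
    using s0 by (simp add: powr_divide powr_diff)
  also have "\<dots> < s * c / a1 powr t" using sc s0 a1 by (intro divide_strict_right_mono mult_strict_left_mono) auto
  also have "\<dots> = s / a2 powr t" unfolding c_def using a1 a12 by (simp add: powr_divide)
  finally have h1: "(s/a1) powr t < s / a2 powr t" .
  have "(1-s) powr t \<le> (1-s) powr 1" using s0 t1 by (intro powr_mono') auto
  hence h2: "((1-s)/a2) powr t \<le> (1-s) / a2 powr t" using s0 by (simp add: powr_divide divide_right_mono)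
  have e: "\<bar>s/a1\<bar> = s/a1" "\<bar>(1-s)/a2\<bar> = (1-s)/a2" using s0 by auto
  have "(s/a1) powr t + ((1-s)/a2) powr t < s / a2 powr t + (1-s)/a2 powr t" using h1 h2 by linarith
  also have "\<dots> = 1/a2 powr t" by (simp add: add_divide_distrib[symmetric])
  finally have "\<bar>s/a1\<bar> powr t + \<bar>(1-s)/a2\<bar> powr t < 1 / a2 powr t" unfolding e .
  hence "(\<bar>s/a1\<bar> powr t + \<bar>(1-s)/a2\<bar> powr t) powr (1/t) < (1 / a2 powr t) powr (1/t)"
    using t1 by (intro powr_less_mono2) auto
  also have "\<dots> = 1/a2" using t1 a12 by (simp add: powr_powr powr_divide)
  finally have "mu t a1 a2 (1-s) < 1/a2" unfolding mu_def tnorm_def by simp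
  moreover have "1/a2 \<le> mu t a1 a2 0" using mu_at0 a12 a1 by (simp add: frac_le)
  ultimately obtain r where r: "0 \<le> r" "r \<le> 1-s" "mu t a1 a2 r = 1/a2"
    using IVT2'[of "mu t a1 a2" "1-s" "1/a2" 0] s0 continuous_on_subset[OF mu_cont] by auto
  hence "r0 t a1 a2 \<le> r" using r0_le s0 by auto
  thus ?thesis using r s0 by simp
qed

lemma r0_above:
  assumes "r0 t a1 a2 \<le> r" "r \<le> 1"
  shows "mu t a1 a2 r \<le> 1/a2"
proof -
  have "convex_on {r0 t a1 a2..1} (mu t a1 a2)" using convex_on_subset[OF mu_cvx] by auto
  from convex_onD_Icc'[OF this, of r] assms
  show ?thesis using r0_val mu_at1 by simp
qed

lemma mu_deriv: "(mu t a1 a2 has_real_derivative Pder t a1 a2) (at (r0 t a1 a2))"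
proof -
  let ?r = "r0 t a1 a2"
  define g where "g r = (((1-r)/a1) powr t + (r/a2) powr t) powr (1/t)" for r :: real
  have "\<exists>D. (g has_real_derivative D) (at ?r)"
    unfolding g_def using r0_pos r0_lt1 a1 a12
    by (intro exI derivative_eq_intros refl) (auto simp: add_pos_pos)
  then obtain D where D: "(g has_real_derivative D) (at ?r)" by blast
  have "(mu t a1 a2 has_real_derivative D) (at ?r)"
  proof (rule has_field_derivative_transform_within_open[OF D, of "{0<..<1}"])
    show "?r \<in> {0<..<1}" using r0_pos r0_lt1 by auto
    fix x :: real assume "x \<in> {0<..<1}"
    thus "g x = mu t a1 a2 x" unfolding g_def mu_def tnorm_def by simp
  qed simp
  moreover hence "deriv (mu t a1 a2) ?r = D" by (rule DERIV_imp_deriv)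
  ultimately show ?thesis unfolding Pder_def by simp
qed

lemma tangent: "mu t a1 a2 v - mu t a1 a2 (r0 t a1 a2) \<ge> Pder t a1 a2 * (v - r0 t a1 a2)"
  by (rule convex_on_imp_above_tangent[OF mu_cvx]) (use mu_deriv in auto)

lemma P_neg: "Pder t a1 a2 \<le> 0"
proof (rule ccontr)
  let ?P = "Pder t a1 a2" and ?r = "r0 t a1 a2" and ?f = "mu t a1 a2"
  assume "\<not> ?P \<le> 0"
  hence Pp: "?P > 0" by simp
  have "((\<lambda>h. (?f (?r + h) - ?f ?r) / h) \<longlongrightarrow> ?P) (at_left 0)"
    using mu_deriv unfolding DERIV_def by (rule filterlim_mono) (auto simp: at_le)
  from order_tendstoD(1)[OF this, of 0] Pp
  have "eventually (\<lambda>h. (?f (?r + h) - ?f ?r) / h > 0) (at_left 0)" by simp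
  moreover have "eventually (\<lambda>h. h \<in> {-?r<..<0}) (at_left (0::real))"
    using r0_pos by (intro eventually_at_left_real) auto
  ultimately obtain h where h: "(?f (?r + h) - ?f ?r) / h > 0" "h \<in> {-?r<..<0}"
    by (metis (mono_tags, lifting) eventually_conj eventually_happens' trivial_limit_at_left_real)
  have "?f (?r + h) > 1/a2" using below_r0[of "?r + h"] h by simp
  hence "(?f (?r + h) - ?f ?r) / h < 0" using h(2) r0_val by (simp add: divide_pos_neg)
  thus False using h(1) by simp
qed

end


lemma lattice_step:
  fixes a1 a2 m n m' n' :: nat
  assumes "coprime a1 a2" "m*a1 + n*a2 = m'*a1 + n'*a2" "n < n'" "a1 > 0" "a2 > 0"
  shows "n + a1 \<le> n' \<and> a2 \<le> m"
proof -
  have "n*a2 < n'*a2" using assms(3,5) by simp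
  hence mm: "m'*a1 < m*a1" using assms(2) by linarith
  have e: "(m - m')*a1 = (n' - n)*a2" 
    using assms(2) mm \<open>n*a2 < n'*a2\<close> by (simp add: diff_mult_distrib)
  have "a1 dvd (n' - n)*a2" by (metis e dvd_triv_right)
  hence "a1 dvd (n' - n)" using assms(1) by (simp add: coprime_dvd_mult_left_iff)
  hence d: "a1 \<le> n' - n" using assms(3) by (simp add: dvd_imp_le)
  hence "a1*a2 \<le> (n' - n)*a2" by simp
  hence "a2*a1 \<le> (m - m')*a1" using e by (simp add: mult.commute)
  hence "a2 \<le> m - m'" using assms(4) by simp
  thus ?thesis using d assms(3) by arith
qed

context
  fixes a1 a2 :: nat and t :: real
  assumes a1: "1 < a1" and a12: "a1 < a2" and t1: "1 < t"
begin

lemma V_eq: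
  assumes "m*a1 + n*a2 = x" "x > 0"
  shows "tnorm t (real m, real n) = real x * mu t a1 a2 (real n * a2 / x)"
proof -
  have "(1 - real n * a2 / x) / a1 = (1/x) * m"
  proof -
    have "real x = m*a1 + n*a2" using assms(1) by (metis of_nat_add of_nat_mult)
    hence hx: "real x - real n * a2 = real m * a1" by simp
    have "(1 - real n * a2 / x) / a1 = ((real x - real n*a2)/x)/a1" using assms(2) by (simp add: diff_divide_distrib)
    also have "\<dots> = (real m * a1 / x) / a1" using hx by simp
    also have "\<dots> = (1/x) * m" using a1 by simp
    finally show ?thesis .
  qed
  moreover have "(real n * a2 / x) / a2 = (1/x) * n" using a12 by simp
  ultimately have "mu t a1 a2 (real n * a2 / x) = tnorm t ((1/x) * m, (1/x) * n)"
    unfolding mu_def by simp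
  also have "\<dots> = (1/x) * tnorm t (m, n)" using tnorm_homog[of t "1/x"] t1 by simp
  finally show ?thesis using assms(2) by simp
qed

lemma slope_left:
  assumes "0 \<le> a" "a \<le> b" "b \<le> r0 t a1 a2"
  shows "mu t a1 a2 a - mu t a1 a2 b \<ge> - Pder t a1 a2 * (b - a)"
proof -
  let ?f = "mu t a1 a2" and ?r = "r0 t a1 a2" and ?P = "Pder t a1 a2"
  have tg: "?f a - ?f ?r \<ge> - ?P * (?r - a)" using tangent[OF a1 a12 t1, of a] by (simp add: algebra_simps)
  show ?thesis
  proof (cases "b = ?r")
    case True thus ?thesis using tg by simp
  next
    case False
    hence br: "b < ?r" using assms by simp
    have "convex_on {a..?r} ?f" using convex_on_subset[OF mu_cvx[OF a1 a12 t1]] by auto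
    from convex_onD_Icc'[OF this, of b] assms
    have cb: "?f b \<le> (?f ?r - ?f a) / (?r - a) * (b - a) + ?f a" by simp
    have "(?f a - ?f ?r) / (?r - a) \<ge> - ?P" using tg br assms by (simp add: divide_simps)
    hence "(?f a - ?f ?r) / (?r - a) * (b - a) \<ge> - ?P * (b - a)" using assms by (intro mult_right_mono) auto
    moreover have "(?f ?r - ?f a) / (?r - a) * (b - a) = - ((?f a - ?f ?r) / (?r - a) * (b - a))"
      by (metis minus_diff_eq minus_divide_left mult_minus_left)
    ultimately show ?thesis using cb by linarith
  qed
qed

lemma max_endpoints:
  assumes "a \<le> c" "c \<le> b"
  shows "mu t a1 a2 c \<le> max (mu t a1 a2 a) (mu t a1 a2 b)"
proof -
  have "convex_on {a..b} (mu t a1 a2)" using convex_on_subset[OF mu_cvx[OF a1 a12 t1]] by auto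
  from convex_onD_Icc'[OF this, of c] assms
  have h: "mu t a1 a2 c \<le> (mu t a1 a2 b - mu t a1 a2 a) / (b - a) * (c - a) + mu t a1 a2 a" by simp
  show ?thesis
  proof (cases "a = b")
    case True thus ?thesis using assms by simp
  next
    case False
    hence ab: "a < b" using assms by simp
    define l where "l = (c - a) / (b - a)"
    have l: "0 \<le> l" "l \<le> 1" unfolding l_def using assms ab by auto
    have "(mu t a1 a2 b - mu t a1 a2 a) / (b - a) * (c - a) = (mu t a1 a2 b - mu t a1 a2 a) * l"
      unfolding l_def by simp
    hence "mu t a1 a2 c \<le> l * mu t a1 a2 b + (1 - l) * mu t a1 a2 a"
      using h by (simp add: algebra_simps)
    also have "\<dots> \<le> l * max (mu t a1 a2 a) (mu t a1 a2 b) + (1 - l) * max (mu t a1 a2 a) (mu t a1 a2 b)"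
      using l by (intro add_mono mult_left_mono) auto
    finally show ?thesis by (simp add: algebra_simps)
  qed
qed

lemma chord_right:
  assumes "0 \<le> s" "s \<le> d" "d > 0"
  shows "mu t a1 a2 (r0 t a1 a2 + s) \<le> mu t a1 a2 (r0 t a1 a2) + s * ((mu t a1 a2 (r0 t a1 a2 + d) - mu t a1 a2 (r0 t a1 a2)) / d)"
proof -
  let ?r = "r0 t a1 a2"
  have "convex_on {?r..?r+d} (mu t a1 a2)" using convex_on_subset[OF mu_cvx[OF a1 a12 t1]] by auto
  from convex_onD_Icc'[OF this, of "?r + s"] assms show ?thesis by (simp add: algebra_simps)
qed

lemma chord_left:
  assumes "0 \<le> s" "s \<le> d" "d > 0"
  shows "mu t a1 a2 (r0 t a1 a2 - s) \<le> mu t a1 a2 (r0 t a1 a2) + s * ((mu t a1 a2 (r0 t a1 a2 - d) - mu t a1 a2 (r0 t a1 a2)) / d)"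
proof -
  let ?r = "r0 t a1 a2"
  have "convex_on {?r-d..?r} (mu t a1 a2)" using convex_on_subset[OF mu_cvx[OF a1 a12 t1]] by auto
  from convex_onD_Icc''[OF this, of "?r - s"] assms show ?thesis by (simp add: algebra_simps)
qed

end


lemma fact_finite:
  assumes "a1 > 0" "a2 > 0"
  shows "finite (factorizations a1 a2 x)"
proof -
  have b: "m \<le> m*a1+n*a2 \<and> n \<le> m*a1+n*a2" for m n
  proof -
    have "m \<le> m*a1" "n \<le> n*a2" using assms by simp_all
    thus ?thesis by linarith
  qed
  have "factorizations a1 a2 x \<subseteq> {0..x} \<times> {0..x}"
    unfolding factorizations_def using b by auto
  thus ?thesis by (rule finite_subset) auto
qed

lemma tlengths_finite:
  assumes "a1 > 0" "a2 > 0"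
  shows "finite (tlengths t a1 a2 x)"
  unfolding tlengths_def using fact_finite[OF assms] by simp

lemma fac_shift:
  fixes m n a1 a2 x :: nat
  assumes "m*a1 + n*a2 = x" "a2 \<le> m"
  shows "(m - a2)*a1 + (n + a1)*a2 = x"
proof -
  have "(m - a2)*a1 = m*a1 - a2*a1" by (simp add: diff_mult_distrib)
  moreover have "a2*a1 \<le> m*a1" using assms(2) by simp
  moreover have "(n + a1)*a2 = n*a2 + a2*a1" by (simp add: algebra_simps)
  ultimately show ?thesis using assms(1) by linarith
qed

lemma tnorm_0a:
  fixes t v :: real assumes "t > 0" "v \<ge> 0"
  shows "tnorm t (0, v) = v"
  unfolding tnorm_def using assms by (simp add: powr_powr)

context
  fixes a1 a2 :: nat and t :: real
  assumes a1: "1 < a1" and a12: "a1 < a2" and t1: "1 < t"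
begin

lemma step_up:
  assumes "a2 \<le> m"
  shows "tnorm t (real (m - a2), real (n + a1)) \<le> tnorm t (real m, real n) + a1"
proof -
  have "tnorm t (real (m - a2), real (n + a1)) = tnorm t (real (m - a2) + 0, real n + real a1)" by simp
  also have "\<dots> \<le> tnorm t (real (m - a2), real n) + tnorm t (0, real a1)"
    by (rule tnorm_triangle) (use t1 in simp)
  also have "tnorm t (0, real a1) = a1" using tnorm_0a t1 by simp
  also have "tnorm t (real (m - a2), real n) \<le> tnorm t (real m, real n)"
    using t1 assms by (intro tnorm_mono) auto
  finally show ?thesis by simp
qed

lemma classify:
  fixes x :: nat and y z :: real
  assumes cop: "coprime a1 a2" and x0: "x > 0"
    and yL: "y \<in> tlengths t a1 a2 x" and zL: "z \<in> tlengths t a1 a2 x" and yz: "y < z"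
    and cons: "\<forall>w \<in> tlengths t a1 a2 x. \<not> (y < w \<and> w < z)"
  shows "z - y \<le> a1 \<or> z - y \<ge> - Pder t a1 a2 * a1 * a2 \<or>
    (\<exists>mz nz mN nN. mz*a1 + nz*a2 = x \<and> mN*a1 + nN*a2 = x \<and> a2 \<le> mz \<and>
       real nz * a2 \<le> x * r0 t a1 a2 \<and> x * r0 t a1 a2 < real (nz + a1) * a2 \<and> mN < a2 \<and>
       (z - y = tnorm t (real mz, real nz) - tnorm t (real (mz - a2), real (nz + a1)) \<or> z - y = tnorm t (real mz, real nz) - tnorm t (real mN, real nN)))"
proof -
  let ?F = "factorizations a1 a2 x" and ?f = "mu t a1 a2" and ?r = "r0 t a1 a2" and ?P = "Pder t a1 a2"
  have a10: "a1 > 0" and a20: "a2 > 0" using a1 a12 by auto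
  have finF: "finite ?F" using fact_finite[OF a10 a20] .
  have memL: "tnorm t (real m, real n) \<in> tlengths t a1 a2 x" if "m*a1 + n*a2 = x" for m n
    using that unfolding tlengths_def factorizations_def by force
  have Veq: "tnorm t (real m, real n) = real x * ?f (real n * a2 / x)" if "m*a1 + n*a2 = x" for m n
    using V_eq[OF a1 a12 t1 that x0] .
  have rle1: "real n * a2 / x \<le> 1" if "m*a1 + n*a2 = x" for m n
  proof -
    have "n*a2 \<le> x" using that by linarith
    hence "real n * a2 \<le> x" by (metis of_nat_le_iff of_nat_mult)
    thus ?thesis using x0 by simp
  qed
  have Pn: "?P \<le> 0" using P_neg[OF a1 a12 t1] .
  obtain my ny where ymn: "my*a1 + ny*a2 = x" "y = tnorm t (real my, real ny)"
    using yL unfolding tlengths_def factorizations_def by auto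
  obtain mz nz where zmn: "mz*a1 + nz*a2 = x" "z = tnorm t (real mz, real nz)"
    using zL unfolding tlengths_def factorizations_def by auto
  define l where "l = real x / a2"
  show ?thesis
  proof (cases "z \<le> l")
    case True
    define U where "U = {p \<in> ?F. tnorm t (real (fst p), real (snd p)) < z}"
    have "(my, ny) \<in> U" unfolding U_def factorizations_def using ymn yz by auto
    hence Une: "U \<noteq> {}" by auto
    have finU: "finite U" unfolding U_def using finF by simp
    define nmax where "nmax = Max (snd ` U)"
    have "nmax \<in> snd ` U" unfolding nmax_def using finU Une by simp
    then obtain mu where muU: "(mu, nmax) \<in> U" by force
    have nmaxge: "snd p \<le> nmax" if "p \<in> U" for p unfolding nmax_def using finU that by simp
    have mueq: "mu*a1 + nmax*a2 = x" using muU unfolding U_def factorizations_def by simp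
    define vu where "vu = tnorm t (real mu, real nmax)"
    have vuz: "vu < z" using muU unfolding U_def vu_def by simp
    have "vu \<le> y" using cons memL[OF mueq] vuz unfolding vu_def by auto
    moreover have "vu \<ge> z - a1"
    proof (cases "a2 \<le> mu")
      case True
      have fac: "(mu - a2)*a1 + (nmax + a1)*a2 = x" using fac_shift[OF mueq True] .
      have "(mu - a2, nmax + a1) \<notin> U" using nmaxge[of "(mu - a2, nmax + a1)"] a10 by auto
      hence "tnorm t (real (mu - a2), real (nmax + a1)) \<ge> z"
        using fac unfolding U_def factorizations_def by auto
      thus ?thesis using step_up[OF True, of nmax] unfolding vu_def by simp
    next
      case False
      have "real mu * a1 + real nmax * a2 = x" using mueq by (metis of_nat_add of_nat_mult)
      moreover have "real mu * a1 \<le> real a2 * a1" using False by (intro mult_right_mono) auto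
      ultimately have "real nmax * a2 \<ge> x - real a2 * a1" by linarith
      hence "real nmax \<ge> l - a1" unfolding l_def using a20 by (simp add: field_simps)
      moreover have "real nmax \<le> vu" unfolding vu_def using tnorm_ge_snd[where u="real mu" and v="real nmax" and t=t] t1 by simp
      ultimately show ?thesis using True by linarith
    qed
    ultimately show ?thesis by simp
  next
    case False
    hence zl: "z > l" by simp
    define rz where "rz = real nz * a2 / x"
    define ry where "ry = real ny * a2 / x"
    have zf: "z = x * ?f rz" unfolding rz_def using Veq[OF zmn(1)] zmn(2) by simp
    have yf: "y = x * ?f ry" unfolding ry_def using Veq[OF ymn(1)] ymn(2) by simp
    have rz0: "rz \<ge> 0" and ry0: "ry \<ge> 0" unfolding rz_def ry_def by auto
    have rz1: "rz \<le> 1" and ry1: "ry \<le> 1" unfolding rz_def ry_def using rle1 zmn(1) ymn(1) by auto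
    have lf: "l = x * (1/a2)" unfolding l_def by simp
    have rzr: "rz \<le> ?r"
    proof (rule ccontr)
      assume "\<not> rz \<le> ?r"
      hence "?f rz \<le> 1/a2" using r0_above[OF a1 a12 t1] rz1 by simp
      hence "z \<le> l" unfolding zf lf using x0 by (intro mult_left_mono) auto
      thus False using zl by simp
    qed
    have nyz: "nz < ny"
    proof (rule ccontr)
      assume "\<not> nz < ny"
      hence "real ny * a2 \<le> real nz * a2" by (intro mult_right_mono) auto
      hence "ry \<le> rz" unfolding ry_def rz_def using x0 by (simp add: divide_right_mono)
      hence "?f ry - ?f rz \<ge> - ?P * (rz - ry)" using slope_left[OF a1 a12 t1 ry0 _ rzr] by simp
      moreover have "- ?P * (rz - ry) \<ge> 0" using Pn \<open>ry \<le> rz\<close> mult_nonpos_nonneg[of ?P "rz - ry"] by simp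
      ultimately have "?f ry \<ge> ?f rz" by simp
      hence "y \<ge> z" unfolding yf zf using x0 by (intro mult_left_mono) auto
      thus False using yz by simp
    qed
    have lat: "nz + a1 \<le> ny \<and> a2 \<le> mz" using lattice_step[OF cop _ nyz a10 a20, of mz my] zmn(1) ymn(1) by simp
    define h where "h = real a1 * a2 / x"
    have xh: "x * h = a1 * a2" unfolding h_def using x0 by simp
    have h0: "h \<ge> 0" unfolding h_def by simp
    have ryz: "ry - rz \<ge> h"
    proof -
      have "real (nz + a1) \<le> real ny" using lat by linarith
      hence "real nz + a1 \<le> ny" by simp
      hence "(real nz + a1) * a2 / x \<le> real ny * a2 / x" using x0 by (intro divide_right_mono mult_right_mono) auto
      thus ?thesis unfolding ry_def rz_def h_def by (simp add: algebra_simps add_divide_distrib)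
    qed
    show ?thesis
    proof (cases "ry \<le> ?r")
      case True
      have "?f rz - ?f ry \<ge> - ?P * (ry - rz)" using slope_left[OF a1 a12 t1 rz0 _ True] ryz h0
        by simp
      also have "- ?P * (ry - rz) \<ge> - ?P * h" using Pn ryz by (intro mult_left_mono) auto
      finally have "x * (?f rz - ?f ry) \<ge> x * (- ?P * h)" using x0 by (intro mult_left_mono) auto
      hence "z - y \<ge> - ?P * (x * h)" unfolding zf yf by (simp add: algebra_simps)
      moreover have "- ?P * (x * h) = - ?P * a1 * a2" using xh by simp
      ultimately show ?thesis by (intro disjI2 disjI1) linarith
    next
      case False
      hence ryr: "ry > ?r" by simp
      have yl: "y \<le> l" unfolding yf lf using r0_above[OF a1 a12 t1 _ ry1] ryr x0 by (intro mult_left_mono) auto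
      define r1 where "r1 = real (nz + a1) * a2 / x"
      have r1h: "r1 = rz + h" unfolding r1_def rz_def h_def by (simp add: algebra_simps add_divide_distrib)
      show ?thesis
      proof (cases "r1 \<le> ?r")
        case True
        have "?f rz - ?f ?r \<ge> - ?P * (?r - rz)" using slope_left[OF a1 a12 t1 rz0 rzr] by simp
        also have "- ?P * (?r - rz) \<ge> - ?P * h" using Pn True r1h by (intro mult_left_mono) auto
        finally have "x * (?f rz - ?f ?r) \<ge> x * (- ?P * h)" using x0 by (intro mult_left_mono) auto
        hence "z - l \<ge> - ?P * (x * h)" unfolding zf l_def using r0_val[OF a1 a12 t1] by (simp add: algebra_simps)
        moreover have "- ?P * (x * h) = - ?P * a1 * a2" using xh by simp
        ultimately show ?thesis using yl by (intro disjI2 disjI1) linarith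
      next
        case False
        hence r1r: "r1 > ?r" by simp
        have fac1: "(mz - a2)*a1 + (nz + a1)*a2 = x" using fac_shift[OF zmn(1)] lat by simp
        define w1 where "w1 = tnorm t (real (mz - a2), real (nz + a1))"
        have w1f: "w1 = x * ?f r1" unfolding w1_def r1_def using Veq[OF fac1] by simp
        have r11: "r1 \<le> 1" unfolding r1_def using rle1[OF fac1] by simp
        have w1l: "w1 \<le> l" unfolding w1f lf using r0_above[OF a1 a12 t1 _ r11] r1r x0 by (intro mult_left_mono) auto
        have "w1 \<le> y" using cons memL[OF fac1] w1l zl unfolding w1_def by force
        define nN where "nN = Max (snd ` ?F)"
        have "(my, ny) \<in> ?F" unfolding factorizations_def using ymn by simp
        hence "ny \<in> snd ` ?F" by force
        hence "nN \<in> snd ` ?F" "ny \<le> nN" unfolding nN_def using finF by (auto intro: Max_ge Max_in)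
        then obtain mN where mNF: "(mN, nN) \<in> ?F" by force
        have nNge: "snd p \<le> nN" if "p \<in> ?F" for p unfolding nN_def using finF that by simp
        have facN: "mN*a1 + nN*a2 = x" using mNF unfolding factorizations_def by simp
        have mNa: "mN < a2"
        proof (rule ccontr)
          assume "\<not> mN < a2"
          hence "(mN - a2)*a1 + (nN + a1)*a2 = x" using fac_shift[OF facN] by simp
          hence "(mN - a2, nN + a1) \<in> ?F" unfolding factorizations_def by simp
          thus False using nNge[of "(mN - a2, nN + a1)"] a10 by simp
        qed
        define rN where "rN = real nN * a2 / x"
        define w2 where "w2 = tnorm t (real mN, real nN)"
        have w2f: "w2 = x * ?f rN" unfolding w2_def rN_def using Veq[OF facN] by simp
        have rN1: "rN \<le> 1" unfolding rN_def using rle1[OF facN] by simp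
        have "real ny * a2 \<le> real nN * a2" using \<open>ny \<le> nN\<close> by (intro mult_right_mono) auto
        hence ryN: "ry \<le> rN" unfolding ry_def rN_def using x0 by (simp add: divide_right_mono)
        have w2l: "w2 \<le> l" unfolding w2f lf using r0_above[OF a1 a12 t1 _ rN1] ryr ryN x0 by (intro mult_left_mono) auto
        have "w2 \<le> y" using cons memL[OF facN] w2l zl unfolding w2_def by force
        have r1y: "r1 \<le> ry" using r1h ryz by simp
        have "?f ry \<le> max (?f r1) (?f rN)" using max_endpoints[OF a1 a12 t1 r1y ryN] .
        hence "x * ?f ry \<le> x * max (?f r1) (?f rN)" using x0 by (intro mult_left_mono) auto
        also have "x * max (?f r1) (?f rN) = max (x * ?f r1) (x * ?f rN)" using x0 by (simp add: max_def)
        finally have "y \<le> max w1 w2" unfolding yf w1f w2f .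
        hence "y = w1 \<or> y = w2" using \<open>w1 \<le> y\<close> \<open>w2 \<le> y\<close> by linarith
        moreover have "real nz * a2 \<le> x * ?r" using rzr x0 unfolding rz_def by (simp add: divide_simps mult.commute)
        moreover have "x * ?r < real (nz + a1) * a2" using r1r x0 unfolding r1_def by (simp add: divide_simps mult.commute)
        ultimately show ?thesis using zmn facN lat mNa unfolding w1_def w2_def
          by (intro disjI2) (rule exI[of _ mz], rule exI[of _ nz], rule exI[of _ mN], rule exI[of _ nN], auto)
      qed
    qed
  qed
qed

end


lemma tnorm_upper:
  fixes t m n :: real
  assumes "t > 1" "n > 0" "m \<ge> 0"
  shows "tnorm t (m, n) \<le> n + m powr t * n powr (1 - t)"
proof -
  define u where "u = (m/n) powr t"
  have u0: "u \<ge> 0" unfolding u_def by simp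
  have "m powr t = n powr t * u" unfolding u_def using assms by (simp add: powr_divide)
  hence "\<bar>m\<bar> powr t + \<bar>n\<bar> powr t = n powr t * (1 + u)" using assms by (simp add: algebra_simps)
  hence "tnorm t (m, n) = (n powr t) powr (1/t) * (1 + u) powr (1/t)"
    unfolding tnorm_def using assms u0 by (simp add: powr_mult)
  also have "(n powr t) powr (1/t) = n" using assms by (simp add: powr_powr)
  also have "(1 + u) powr (1/t) \<le> (1 + u) powr 1" using assms u0 by (intro powr_mono) auto
  hence "n * (1 + u) powr (1/t) \<le> n * (1 + u)" using assms u0 by (intro mult_left_mono) auto
  also have "n * (1 + u) = n + m powr t * n powr (1 - t)"
    unfolding u_def using assms by (simp add: powr_divide powr_diff algebra_simps)
  finally show ?thesis .
qed

context
  fixes a1 a2 :: nat and t :: real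
  assumes a1: "1 < a1" and a12: "a1 < a2" and t1: "1 < t"
begin

lemma asymp:
  fixes p q :: int and e :: real
  assumes pq: "real_of_int p / real_of_int q = r0 t a1 a2" "q > 0" and e0: "e > 0"
  shows "\<exists>X. \<forall>x::nat \<ge> X. \<forall>mz nz mN nN. mz*a1 + nz*a2 = x \<and> mN*a1 + nN*a2 = x \<and> a2 \<le> mz \<and>
       real nz * a2 \<le> x * r0 t a1 a2 \<and> x * r0 t a1 a2 < real (nz + a1) * a2 \<and> mN < a2 \<longrightarrow>
       \<bar>tnorm t (real mz, real nz) - tnorm t (real (mz - a2), real (nz + a1)) - (- Pder t a1 a2 * a1 * a2)\<bar> \<le> e \<and>
       (\<exists>\<phi> \<in> (\<lambda>(k,m). - Pder t a1 a2 * real k / q + real a1 * real m / a2) ` ({0..<nat (q*a1*a2)} \<times> {0..<a2}).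
          \<bar>tnorm t (real mz, real nz) - tnorm t (real mN, real nN) - \<phi>\<bar> \<le> e)"
proof -
  let ?f = "mu t a1 a2" and ?r = "r0 t a1 a2" and ?P = "Pder t a1 a2"
  have a10: "a1 > 0" and a20: "a2 > 0" using a1 a12 by auto
  define c where "c = real a1 * a2"
  have c0: "c > 0" unfolding c_def using a10 a20 by simp
  define \<epsilon> where "\<epsilon> = e / (c + 1)"
  have \<epsilon>0: "\<epsilon> > 0" unfolding \<epsilon>_def using e0 c0 by simp
  have "c * \<epsilon> + \<epsilon> = (c + 1) * \<epsilon>" by (simp add: algebra_simps)
  also have "\<dots> = e" unfolding \<epsilon>_def using c0 by simp
  finally have ce: "c * \<epsilon> + \<epsilon> = e" .
  have "(\<lambda>h. (?f (?r + h) - ?f ?r) / h) \<midarrow>0\<rightarrow> ?P"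
    using mu_deriv[OF a1 a12 t1] unfolding DERIV_def .
  from LIM_D[OF this \<epsilon>0] obtain \<delta>0 where \<delta>0: "\<delta>0 > 0"
    "\<And>h. h \<noteq> 0 \<and> norm (h - 0) < \<delta>0 \<Longrightarrow> norm ((?f (?r + h) - ?f ?r) / h - ?P) < \<epsilon>" by blast
  define \<delta> where "\<delta> = \<delta>0 / 2"
  have \<delta>pos: "\<delta> > 0" unfolding \<delta>_def using \<delta>0 by simp
  define \<tau> where "\<tau> = (?f (?r + \<delta>) - ?f ?r) / \<delta>"
  define \<sigma> where "\<sigma> = (?f (?r - \<delta>) - ?f ?r) / \<delta>"
  have dlt: "\<delta> < \<delta>0" unfolding \<delta>_def using \<delta>0 by simp
  have dd1: "\<delta> \<noteq> 0 \<and> norm (\<delta> - 0) < \<delta>0" using \<delta>pos dlt by simp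
  have dd2: "-\<delta> \<noteq> 0 \<and> norm (-\<delta> - 0) < \<delta>0" using \<delta>pos dlt by simp
  have \<tau>: "\<bar>\<tau> - ?P\<bar> < \<epsilon>" using \<delta>0(2)[OF dd1] unfolding \<tau>_def by simp
  have \<sigma>: "\<bar>\<sigma> + ?P\<bar> < \<epsilon>"
  proof -
    have "\<bar>(?f (?r + - \<delta>) - ?f ?r) / (- \<delta>) - ?P\<bar> < \<epsilon>" using \<delta>0(2)[OF dd2] by simp
    moreover have "(?f (?r + - \<delta>) - ?f ?r) / (- \<delta>) = - \<sigma>" unfolding \<sigma>_def by (simp add: divide_simps)
    ultimately show ?thesis by (simp add: abs_minus_commute)
  qed
  have lim: "(\<lambda>n::nat. real a2 powr t * real n powr (1 - t)) \<longlonglongrightarrow> real a2 powr t * 0"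
    using t1 by (intro tendsto_mult tendsto_const tendsto_neg_powr filterlim_real_sequentially) auto
  from order_tendstoD(2)[OF lim, of \<epsilon>] \<epsilon>0 obtain N0 where
    N0: "\<And>n. n \<ge> N0 \<Longrightarrow> real a2 powr t * real n powr (1 - t) < \<epsilon>"
    by (auto simp: eventually_sequentially)
  define X where "X = nat \<lceil>c / \<delta>\<rceil> + (N0 + 1 + a1) * a2 + 1"
  show ?thesis
  proof (intro exI[of _ X] allI impI)
    fix x :: nat and mz nz mN nN
    assume xX: "x \<ge> X"
    assume H: "mz*a1 + nz*a2 = x \<and> mN*a1 + nN*a2 = x \<and> a2 \<le> mz \<and>
       real nz * a2 \<le> x * ?r \<and> x * ?r < real (nz + a1) * a2 \<and> mN < a2"
    have x0: "real x > 0" using xX unfolding X_def by simp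
    have "real x \<ge> c / \<delta>"
    proof -
      have "real X \<ge> c / \<delta>" unfolding X_def by linarith
      thus ?thesis using xX by linarith
    qed
    hence cx: "c / x \<le> \<delta>" using x0 \<delta>pos c0 by (simp add: field_simps)
    define l where "l = real x / a2"
    have lr: "x * ?f ?r = l" unfolding l_def using r0_val[OF a1 a12 t1] by simp
    define d where "d = x * ?r - real nz * a2"
    have d0: "d \<ge> 0" and dc: "d < c" unfolding d_def c_def using H by (auto simp: algebra_simps)
    define d' where "d' = c - d"
    have d'0: "d' > 0" and d'c: "d' \<le> c" unfolding d'_def using d0 dc by auto
    have rz: "real nz * a2 / x = ?r - d / x" unfolding d_def using x0 by (simp add: field_simps)
    have r1: "real (nz + a1) * a2 / x = ?r + d' / x" unfolding d'_def d_def c_def using x0 by (simp add: field_simps)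
    have dx: "d / x \<le> \<delta>" using cx dc x0 by (smt (verit) divide_right_mono)
    have d'x: "d' / x \<le> \<delta>" using cx d'c x0 by (smt (verit) divide_right_mono)
    have z: "tnorm t (real mz, real nz) = x * ?f (?r - d / x)"
      using V_eq[OF a1 a12 t1, of mz nz x] H x0 rz by simp
    have w1: "tnorm t (real (mz - a2), real (nz + a1)) = x * ?f (?r + d' / x)"
      using V_eq[OF a1 a12 t1, of "mz - a2" "nz + a1" x] H x0 r1 fac_shift[of mz a1 nz a2 x] by simp
    have zlo: "x * ?f (?r - d / x) \<ge> l - ?P * d"
    proof -
      have "?f (?r - d/x) - ?f ?r \<ge> ?P * (- (d/x))" using tangent[OF a1 a12 t1, of "?r - d/x"] by simp
      hence "x * (?f (?r - d/x) - ?f ?r) \<ge> x * (?P * (- (d/x)))" using x0 by (intro mult_left_mono) auto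
      thus ?thesis using lr x0 by (simp add: algebra_simps)
    qed
    have zhi: "x * ?f (?r - d / x) \<le> l + d * \<sigma>"
    proof -
      have "?f (?r - d/x) \<le> ?f ?r + d/x * \<sigma>" unfolding \<sigma>_def using chord_left[OF a1 a12 t1, of "d/x" \<delta>] d0 x0 dx \<delta>pos by simp
      hence "x * ?f (?r - d/x) \<le> x * (?f ?r + d/x * \<sigma>)" using x0 by (intro mult_left_mono) auto
      thus ?thesis using lr x0 by (simp add: algebra_simps)
    qed
    have w1lo: "x * ?f (?r + d' / x) \<ge> l + ?P * d'"
    proof -
      have "?f (?r + d'/x) - ?f ?r \<ge> ?P * (d'/x)" using tangent[OF a1 a12 t1, of "?r + d'/x"] by simp
      hence "x * (?f (?r + d'/x) - ?f ?r) \<ge> x * (?P * (d'/x))" using x0 by (intro mult_left_mono) auto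
      thus ?thesis using lr x0 by (simp add: algebra_simps)
    qed
    have w1hi: "x * ?f (?r + d' / x) \<le> l + d' * \<tau>"
    proof -
      have "?f (?r + d'/x) \<le> ?f ?r + d'/x * \<tau>" unfolding \<tau>_def using chord_right[OF a1 a12 t1, of "d'/x" \<delta>] d'0 x0 d'x \<delta>pos by simp
      hence "x * ?f (?r + d'/x) \<le> x * (?f ?r + d'/x * \<tau>)" using x0 by (intro mult_left_mono) auto
      thus ?thesis using lr x0 by (simp add: algebra_simps)
    qed
    have D: "- ?P * a1 * a2 = - ?P * (d + d')" unfolding d'_def c_def by simp
    have A1: "d' * (\<tau> - ?P) \<le> c * \<epsilon>"
    proof -
      have "d' * (\<tau> - ?P) \<le> d' * \<epsilon>" using \<tau> d'0 by (intro mult_left_mono) auto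
      also have "\<dots> \<le> c * \<epsilon>" using d'c \<epsilon>0 by (intro mult_right_mono) auto
      finally show ?thesis .
    qed
    have A2: "d * (\<sigma> + ?P) \<le> c * \<epsilon>"
    proof -
      have "d * (\<sigma> + ?P) \<le> d * \<epsilon>" using \<sigma> d0 by (intro mult_left_mono) auto
      also have "\<dots> \<le> c * \<epsilon>" using dc \<epsilon>0 by (intro mult_right_mono) auto
      finally show ?thesis .
    qed
    have partA: "\<bar>tnorm t (real mz, real nz) - tnorm t (real (mz - a2), real (nz + a1)) - (- ?P * a1 * a2)\<bar> \<le> e"
    proof -
      have "tnorm t (real mz, real nz) - tnorm t (real (mz - a2), real (nz + a1)) - (- ?P * a1 * a2) \<ge> - d' * (\<tau> - ?P)"
        using zlo w1hi z w1 D by (simp add: algebra_simps)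
      moreover have "tnorm t (real mz, real nz) - tnorm t (real (mz - a2), real (nz + a1)) - (- ?P * a1 * a2) \<le> d * (\<sigma> + ?P)"
        using zhi w1lo z w1 D by (simp add: algebra_simps)
      ultimately show ?thesis using A1 A2 ce \<epsilon>0 by (simp add: abs_le_iff)
    qed
      have facN: "mN*a1 + nN*a2 = x" using H by simp
    have nNx: "real nN * a2 = x - real mN * a1"
    proof -
      have "real mN * a1 + real nN * a2 = x" using facN by (metis of_nat_add of_nat_mult)
      thus ?thesis by simp
    qed
    have "real mN * a1 \<le> real a2 * a1" using H by (intro mult_right_mono) auto
    hence "real nN * a2 \<ge> real X - real a2 * a1" using nNx xX by simp
    moreover have "real X - real a2 * a1 \<ge> (N0 + 1) * real a2" unfolding X_def by (simp add: algebra_simps)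
    ultimately have "real nN * a2 \<ge> (N0 + 1) * real a2" by linarith
    hence nNN: "real nN \<ge> N0 + 1" using a20 by simp
    hence nN0: "real nN > 0" and nNN0: "nN \<ge> N0" by auto
    define \<eta> where "\<eta> = tnorm t (real mN, real nN) - nN"
    have \<eta>0: "\<eta> \<ge> 0" unfolding \<eta>_def using tnorm_ge_snd[where t=t and u="real mN" and v="real nN"] t1 by simp
    have "\<eta> \<le> real mN powr t * real nN powr (1 - t)" unfolding \<eta>_def using tnorm_upper[OF t1 nN0, of "real mN"] by simp
    also have "\<dots> \<le> real a2 powr t * real nN powr (1 - t)" using H t1 by (intro mult_right_mono powr_mono2) auto
    also have "\<dots> < \<epsilon>" using N0[OF nNN0] .
    finally have \<eta>e: "\<eta> < \<epsilon>" .
    define K where "K = int x * p - q * int nz * int a2"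
    have qd: "real_of_int K = q * d"
    proof -
      have "real x * ?r = real x * p / q" unfolding pq(1)[symmetric] by simp
      thus ?thesis unfolding K_def d_def using pq(2) by (simp add: field_simps) (metis)
    qed
    have K0: "K \<ge> 0" using qd d0 pq(2) by (smt (verit) of_int_0_le_iff zero_le_mult_iff)
    have Kc: "K < q * a1 * a2"
    proof -
      have "q * d < q * c" using dc pq(2) by simp
      hence "real_of_int K < real_of_int (q * a1 * a2)" using qd unfolding c_def by simp
      thus ?thesis by linarith
    qed
    define k where "k = nat K"
    have kd: "real k / q = d" unfolding k_def using K0 qd pq(2) by simp
    have kr: "k \<in> {0..<nat (q*a1*a2)}" unfolding k_def using K0 Kc by simp
    define \<phi> where "\<phi> = - ?P * real k / q + real a1 * real mN / a2"
    have "\<phi> \<in> (\<lambda>(k,m). - ?P * real k / q + real a1 * real m / a2) ` ({0..<nat (q*a1*a2)} \<times> {0..<a2})"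
      unfolding \<phi>_def using kr H by force
    moreover have "\<bar>tnorm t (real mz, real nz) - tnorm t (real mN, real nN) - \<phi>\<bar> \<le> e"
    proof -
      have phid: "\<phi> = - ?P * d + real a1 * real mN / a2" unfolding \<phi>_def using kd by (metis times_divide_eq_right)
      have lN: "real nN = l - real a1 * real mN / a2" unfolding l_def using nNx a20 by (simp add: field_simps)
      have e1: "tnorm t (real mz, real nz) - tnorm t (real mN, real nN) - \<phi> = (x * ?f (?r - d / x) - (l - ?P * d)) - \<eta>"
        unfolding \<eta>_def phid using z lN by (simp add: algebra_simps)
      have "x * ?f (?r - d / x) - (l - ?P * d) \<le> c * \<epsilon>" using zhi A2 by (simp add: algebra_simps)
      thus ?thesis unfolding e1 using zlo \<eta>0 \<eta>e ce \<epsilon>0 c0 by (simp add: abs_le_iff)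
    qed
    ultimately show "\<bar>tnorm t (real mz, real nz) - tnorm t (real (mz - a2), real (nz + a1)) - (- ?P * a1 * a2)\<bar> \<le> e \<and>
       (\<exists>\<phi> \<in> (\<lambda>(k,m). - ?P * real k / q + real a1 * real m / a2) ` ({0..<nat (q*a1*a2)} \<times> {0..<a2}).
          \<bar>tnorm t (real mz, real nz) - tnorm t (real mN, real nN) - \<phi>\<bar> \<le> e)" using partA by blast
  qed
qed

end


lemma tdelta_finite:
  assumes "a1 > 0" "a2 > 0"
  shows "finite (tdelta t a1 a2 x)"
proof -
  let ?L = "tlengths t a1 a2 x"
  have sub: "tdelta t a1 a2 x \<subseteq> (\<lambda>(y,z). z - y) ` (?L \<times> ?L)"
    unfolding tdelta_def by force
  have "finite ((\<lambda>(y,z). z - y) ` (?L \<times> ?L))" using tlengths_finite[OF assms] by simp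
  thus ?thesis by (rule finite_subset[OF sub])
qed

lemma exists_avoid:
  fixes a b :: real and T :: "real set"
  assumes "a < b" "finite T"
  shows "\<exists>c. c \<in> {a<..<b} \<and> c \<notin> T"
proof -
  have "infinite ({a<..<b} - T)" using Diff_infinite_finite[OF assms(2)] assms(1) by simp
  hence "{a<..<b} - T \<noteq> {}" by (rule infinite_imp_nonempty)
  thus ?thesis by blast
qed

theorem proposition3:
  fixes a1 a2 :: nat and t :: real
  assumes "1 < a1" and "a1 < a2" and "coprime a1 a2" and "1 < t"
    and "r0 t a1 a2 \<in> \<rat>"
    and "\<bar>real a1 * real a2 * Pder t a1 a2\<bar> > real a1"
  shows "perspicacious t a1 a2"
proof -
  note a1 = assms(1) and a12 = assms(2) and cop = assms(3) and t1 = assms(4)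
  let ?P = "Pder t a1 a2"
  have a10: "a1 > 0" and a20: "a2 > 0" using a1 a12 by auto
  have Pn: "?P \<le> 0" using P_neg[OF a1 a12 t1] .
  define D where "D = - ?P * a1 * a2"
  have "real a1 * real a2 * ?P \<le> 0" using Pn by (simp add: mult_nonneg_nonpos)
  hence "\<bar>real a1 * real a2 * ?P\<bar> = D" unfolding D_def by (simp add: algebra_simps)
  hence Dg: "D > a1" using assms(6) by simp
  obtain p q where pq: "q > 0" "r0 t a1 a2 = of_int p / of_int q" using Rats_cases'[OF assms(5)] by blast
  define Fs where "Fs = (\<lambda>(k,m). - ?P * real k / q + real a1 * real m / a2) ` ({0..<nat (q*a1*a2)} \<times> {0..<a2})"
  have finFs: "finite Fs" unfolding Fs_def by simp
  define M where "M = min D a2"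
  have aM: "a1 < M" unfolding M_def using Dg a12 by simp
  define F0 where "F0 = insert D Fs"
  have finF0: "finite F0" unfolding F0_def using finFs by simp
  obtain c0 where c0: "c0 \<in> {real a1<..<M}" "c0 \<notin> F0" using exists_avoid[OF aM finF0] by blast
  define \<rho> where "\<rho> = Min ({c0 - a1, M - c0} \<union> (\<lambda>\<phi>. \<bar>c0 - \<phi>\<bar>) ` F0)"
  have finR: "finite ({c0 - a1, M - c0} \<union> (\<lambda>\<phi>. \<bar>c0 - \<phi>\<bar>) ` F0)" using finF0 by simp
  have \<rho>0: "\<rho> > 0" unfolding \<rho>_def using finR c0 by (subst Min_gr_iff) auto
  have \<rho>1: "\<rho> \<le> c0 - a1" "\<rho> \<le> M - c0" unfolding \<rho>_def by (rule Min_le[OF finR], simp)+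
  have \<rho>2: "\<rho> \<le> \<bar>c0 - \<phi>\<bar>" if "\<phi> \<in> F0" for \<phi> unfolding \<rho>_def by (rule Min_le[OF finR]) (use that in blast)
  define e where "e = \<rho> / 3"
  have e0: "e > 0" unfolding e_def using \<rho>0 by simp
  obtain X where X: "\<forall>x::nat \<ge> X. \<forall>mz nz mN nN. mz*a1 + nz*a2 = x \<and> mN*a1 + nN*a2 = x \<and> a2 \<le> mz \<and>
       real nz * a2 \<le> x * r0 t a1 a2 \<and> x * r0 t a1 a2 < real (nz + a1) * a2 \<and> mN < a2 \<longrightarrow>
       \<bar>tnorm t (real mz, real nz) - tnorm t (real (mz - a2), real (nz + a1)) - (- Pder t a1 a2 * a1 * a2)\<bar> \<le> e \<and>
       (\<exists>\<phi> \<in> (\<lambda>(k,m). - Pder t a1 a2 * real k / q + real a1 * real m / a2) ` ({0..<nat (q*a1*a2)} \<times> {0..<a2}).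
          \<bar>tnorm t (real mz, real nz) - tnorm t (real mN, real nN) - \<phi>\<bar> \<le> e)"
    using asymp[OF a1 a12 t1 pq(2)[symmetric] pq(1) e0] by blast
  define G where "G = (\<Union>x \<in> {..X}. tdelta t a1 a2 x)"
  have finG: "finite G" unfolding G_def using tdelta_finite[OF a10 a20] by simp
  obtain c where c: "c \<in> {c0 - e<..<c0 + e}" "c \<notin> G" using exists_avoid[of "c0 - e" "c0 + e" G] e0 finG by auto
  define \<rho>' where "\<rho>' = Min (insert e ((\<lambda>g. \<bar>c - g\<bar>) ` G))"
  have finR': "finite (insert e ((\<lambda>g. \<bar>c - g\<bar>) ` G))" using finG by simp
  have \<rho>'0: "\<rho>' > 0" unfolding \<rho>'_def using finR' c e0 by (subst Min_gr_iff) auto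
  have \<rho>'1: "\<rho>' \<le> e" unfolding \<rho>'_def by (rule Min_le[OF finR']) simp
  have \<rho>'2: "\<rho>' \<le> \<bar>c - g\<bar>" if "g \<in> G" for g unfolding \<rho>'_def by (rule Min_le[OF finR']) (use that in blast)
  have notcl: "c \<notin> closure (tdelta_S t a1 a2)"
  proof
    assume "c \<in> closure (tdelta_S t a1 a2)"
    then obtain v where v: "v \<in> tdelta_S t a1 a2" "dist v c < \<rho>'"
      using \<rho>'0 unfolding closure_approachable by blast
    then obtain x where x: "v \<in> tdelta t a1 a2 x" unfolding tdelta_S_def by blast
    have vc: "\<bar>v - c\<bar> < \<rho>'" using v(2) by (simp add: dist_real_def)
    show False
    proof (cases "x \<le> X")
      case True
      hence "v \<in> G" unfolding G_def using x by blast
      thus False using \<rho>'2[of v] vc by (simp add: abs_minus_commute)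
    next
      case False
      hence xX: "x \<ge> X" and x0: "x > 0" by auto
      obtain y z where yz: "v = z - y" "y \<in> tlengths t a1 a2 x" "z \<in> tlengths t a1 a2 x" "y < z"
        "\<forall>w \<in> tlengths t a1 a2 x. \<not> (y < w \<and> w < z)"
        using x unfolding tdelta_def by blast
      have vc0: "\<bar>v - c0\<bar> < 2 * e" using vc \<rho>'1 c(1) by auto
      have fs: "\<And>\<phi>. \<phi> \<in> F0 \<Longrightarrow> \<bar>v - \<phi>\<bar> > e"
      proof -
        fix \<phi> assume "\<phi> \<in> F0"
        from \<rho>2[OF this] have "3 * e \<le> \<bar>c0 - \<phi>\<bar>" unfolding e_def by simp
        thus "\<bar>v - \<phi>\<bar> > e" using vc0 by linarith
      qed
      from classify[OF a1 a12 t1 cop x0 yz(2,3,4,5)]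
      consider "z - y \<le> a1" | "z - y \<ge> D" | 
        "(\<exists>mz nz mN nN. mz*a1 + nz*a2 = x \<and> mN*a1 + nN*a2 = x \<and> a2 \<le> mz \<and>
       real nz * a2 \<le> x * r0 t a1 a2 \<and> x * r0 t a1 a2 < real (nz + a1) * a2 \<and> mN < a2 \<and>
       (z - y = tnorm t (real mz, real nz) - tnorm t (real (mz - a2), real (nz + a1)) \<or> z - y = tnorm t (real mz, real nz) - tnorm t (real mN, real nN)))"
        unfolding D_def by blast
      then show False
      proof cases
        case 1
        thus False using yz(1) vc0 \<rho>1 unfolding e_def by linarith
      next
        case 2
        thus False using yz(1) vc0 \<rho>1 unfolding e_def M_def by linarith
      next
        case 3
        then obtain mz nz mN nN where H: "mz*a1 + nz*a2 = x \<and> mN*a1 + nN*a2 = x \<and> a2 \<le> mz \<and>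
          real nz * a2 \<le> x * r0 t a1 a2 \<and> x * r0 t a1 a2 < real (nz + a1) * a2 \<and> mN < a2"
          and vv: "v = tnorm t (real mz, real nz) - tnorm t (real (mz - a2), real (nz + a1)) \<or> v = tnorm t (real mz, real nz) - tnorm t (real mN, real nN)"
          using yz(1) by blast
        from X[rule_format, OF xX H] have
          A: "\<bar>tnorm t (real mz, real nz) - tnorm t (real (mz - a2), real (nz + a1)) - D\<bar> \<le> e" and
          B: "\<exists>\<phi> \<in> Fs. \<bar>tnorm t (real mz, real nz) - tnorm t (real mN, real nN) - \<phi>\<bar> \<le> e"
          unfolding D_def Fs_def by auto
        from vv show False
        proof
          assume "v = tnorm t (real mz, real nz) - tnorm t (real (mz - a2), real (nz + a1))"
          thus False using A fs[of D] unfolding F0_def by simp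
        next
          assume "v = tnorm t (real mz, real nz) - tnorm t (real mN, real nN)"
          thus False using B fs unfolding F0_def by force
        qed
      qed
    qed
  qed
  have "c \<in> {0..real a2}" using c(1) c0(1) \<rho>1 e0 unfolding e_def M_def by auto
  thus ?thesis unfolding perspicacious_def dull_def using notcl by blast
qed


end
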